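(* Let $\lambda_1\ge\lambda_2\ge1$ with either $\lambda_1-\lambda_2=1$ or $\lambda_1-\lambda_2\ge 3$, and let $n=\lambda_1+\lambda_2$. Let $(\mu_1,\mu_2)$ be a partition of $n$ with $\mu_1\ge\mu_2\ge1$. Then there exist commuting nilpotent $n\times n$ matrices $B,A$ with $\mathrm{sh}(B)=(\lambda_1,\lambda_2)$ and $\mathrm{sh}(A)=(\mu_1,\mu_2)$ if and only if $(\mu_1,\mu_2)=(\lambda_1,\lambda_2)$.
   Context: $\mathbb{F}$ is an algebraically closed field of characteristic $0$ and matrices are over $\mathbb{F}$. For a nilpotent matrix $A$, $\mathrm{sh}(A)$ is the partition of $n$ given by the sizes of the Jordan blocks of its Jordan canonical form. *)

theory Defs
  imports "Jordan_Normal_Form.Jordan_Normal_Form" "HOL-Computational_Algebra.Polynomial"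
    "HOL-Library.Multiset"
begin

definition nilpotent_mat :: "'a :: semiring_1 mat \<Rightarrow> bool" where
  "nilpotent_mat A \<longleftrightarrow> (\<exists>k. A ^\<^sub>m k = 0\<^sub>m (dim_row A) (dim_col A))"

definition jordan_shape :: "'a :: semiring_1 mat \<Rightarrow> nat multiset \<Rightarrow> bool" where
  "jordan_shape A P \<longleftrightarrow> (\<exists>n_as. jordan_nf A n_as \<and> mset (map fst n_as) = P)"

end

theory Submission imports Defs "Jordan_Normal_Form.Jordan_Normal_Form_Uniqueness" begin
abbreviation tm :: "nat \<Rightarrow> 'a::field poly" where "tm k \<equiv> monom 1 k"

lemma tm_cancel: "tm (j+i) dvd tm j * h \<longleftrightarrow> tm i dvd (h::'a::field poly)"
  by (auto simp: monom_1_dvd_iff' coeff_monom_mult)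
   (metis add.commute add_diff_cancel_left' less_diff_conv2 not_less le_add1)

lemma tm_dvd_mult: "tm i dvd f \<Longrightarrow> tm j dvd g \<Longrightarrow> tm (i+j) dvd (f*g::'a::field poly)"
  by (metis mult_dvd_mono mult_monom mult_1)

lemma tm_le: "i \<le> j \<Longrightarrow> tm j dvd f \<Longrightarrow> tm i dvd (f::'a::field poly)"
  by (auto simp: monom_1_dvd_iff')

lemma tm_monom: "tm k dvd (monom c k :: 'a::field poly)"
  by (auto simp: monom_1_dvd_iff' coeff_monom)

definition Tstep :: "'a::field poly \<Rightarrow> 'a poly \<Rightarrow> 'a poly \<Rightarrow> 'a poly \<Rightarrow> 'a poly \<times> 'a poly \<Rightarrow> 'a poly \<times> 'a poly" where
  "Tstep a c s d x = (fst x * a + snd x * s, fst x * c + snd x * d)"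

lemma T_upper:
  fixes a c s d :: "'a::field poly"
  assumes "tm 1 dvd a" "tm 1 dvd d" "tm 2 dvd s"
  shows "tm k dvd fst ((Tstep a c s d ^^ k) x) \<and> tm k dvd tm 1 * snd ((Tstep a c s d ^^ k) x)"
proof (induction k)
  case 0
  then show ?case by simp
next
  case (Suc k)
  define f where "f = fst ((Tstep a c s d ^^ k) x)"
  define g where "g = snd ((Tstep a c s d ^^ k) x)"
  have f: "tm k dvd f" and g: "tm k dvd tm 1 * g" using Suc by (auto simp: f_def g_def)
  have e: "(Tstep a c s d ^^ Suc k) x = (f * a + g * s, f * c + g * d)"
    by (simp add: Tstep_def f_def g_def)
  have 1: "tm (Suc k) dvd f * a" using tm_dvd_mult[OF f assms(1)] by simp
  have "tm (k+2) dvd (tm 1 * g) * s" using tm_dvd_mult[OF g assms(3)] by simp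
  hence "tm (1 + Suc k) dvd tm 1 * (g * s)" by (simp add: mult.assoc)
  hence 2: "tm (Suc k) dvd g * s" using tm_cancel by blast
  have "tm (1+k) dvd tm 1 * f" using tm_dvd_mult[OF dvd_refl f] .
  hence 3: "tm (Suc k) dvd (tm 1 * f) * c" by (simp add: dvd_mult2)
  have 4: "tm (Suc k) dvd (tm 1 * g) * d" using tm_dvd_mult[OF g assms(2)] by simp
  have "tm 1 * (f * c + g * d) = (tm 1 * f) * c + (tm 1 * g) * d" by (simp add: algebra_simps)
  with 1 2 3 4 show ?case unfolding e by auto
qed

lemma T_lower:
  fixes a c s d :: "'a::field poly"
  assumes a0: "coeff a 0 = 0" and d: "tm 1 dvd d" and s: "tm 3 dvd s"
  shows "tm (Suc k) dvd fst ((Tstep a c s d ^^ k) (1,0)) - monom (coeff a 1 ^ k) k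
     \<and> tm k dvd tm 1 * snd ((Tstep a c s d ^^ k) (1,0))"
proof (induction k)
  case 0
  then show ?case by (simp add: monom_0 one_pCons)
next
  case (Suc k)
  define f where "f = fst ((Tstep a c s d ^^ k) (1,0))"
  define g where "g = snd ((Tstep a c s d ^^ k) (1,0))"
  define \<alpha> where "\<alpha> = coeff a 1"
  define E where "E = f - monom (\<alpha> ^ k) k"
  have E: "tm (Suc k) dvd E" and g: "tm k dvd tm 1 * g" using Suc by (auto simp: f_def g_def E_def \<alpha>_def)
  have e: "(Tstep a c s d ^^ Suc k) (1,0) = (f * a + g * s, f * c + g * d)"
    by (simp add: Tstep_def f_def g_def)
  have a1: "tm 1 dvd a" using a0 by (auto simp: monom_1_dvd_iff')
  have a2: "tm 2 dvd a - monom \<alpha> 1" using a0 by (auto simp: monom_1_dvd_iff' \<alpha>_def less_2_cases_iff)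
  have id: "f * a + g * s - monom (\<alpha> ^ Suc k) (Suc k) = E * a + monom (\<alpha> ^ k) k * (a - monom \<alpha> 1) + g * s"
    by (simp add: E_def algebra_simps mult_monom)
  have 1: "tm (Suc (Suc k)) dvd E * a" using tm_dvd_mult[OF E a1] by simp
  have 2: "tm (Suc (Suc k)) dvd monom (\<alpha> ^ k) k * (a - monom \<alpha> 1)" using tm_dvd_mult[OF tm_monom a2] by simp
  have "tm (k+3) dvd (tm 1 * g) * s" using tm_dvd_mult[OF g s] by simp
  hence "tm (1 + Suc (Suc k)) dvd tm 1 * (g * s)" by (simp add: mult.assoc numeral_3_eq_3)
  hence 3: "tm (Suc (Suc k)) dvd g * s" using tm_cancel by blast
  have "tm k dvd E" using tm_le[OF _ E] by simp
  from dvd_add[OF this tm_monom[of k "\<alpha>^k"]] have fk: "tm k dvd f" unfolding E_def by simp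
  have "tm (1+k) dvd tm 1 * f" using tm_dvd_mult[OF dvd_refl fk] .
  hence 4: "tm (Suc k) dvd (tm 1 * f) * c" by (simp add: dvd_mult2)
  have 5: "tm (Suc k) dvd (tm 1 * g) * d" using tm_dvd_mult[OF g d] by simp
  have eq: "tm 1 * (f * c + g * d) = (tm 1 * f) * c + (tm 1 * g) * d" by (simp add: algebra_simps)
  have fd: "tm (Suc (Suc k)) dvd f * a + g * s - monom (\<alpha> ^ Suc k) (Suc k)"
    unfolding id by (intro dvd_add 1 2 3)
  have sd: "tm (Suc k) dvd tm 1 * (f * c + g * d)" unfolding eq by (intro dvd_add 4 5)
  show ?case unfolding e fst_conv snd_conv \<alpha>_def[symmetric] using fd sd by blast
qed

lemma T_lower_final:
  fixes a c s d :: "'a::field poly"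
  assumes a0: "coeff a 0 = 0" and d: "tm 1 dvd d" and s: "tm 3 dvd s" and a1: "coeff a 1 \<noteq> 0"
  shows "\<not> tm (Suc k) dvd fst ((Tstep a c s d ^^ k) (1,0))"
proof
  assume h: "tm (Suc k) dvd fst ((Tstep a c s d ^^ k) (1,0))"
  from T_lower[OF a0 d s, of k] have "tm (Suc k) dvd fst ((Tstep a c s d ^^ k) (1,0)) - monom (coeff a 1 ^ k) k" by simp
  from dvd_diff[OF h this] have "tm (Suc k) dvd monom (coeff a 1 ^ k) k"
    by simp
  hence "coeff (monom (coeff a 1 ^ k) k) k = 0" by (auto simp: monom_1_dvd_iff')
  with a1 show False by simp
qed

lemma T_res1:
  fixes a c s d :: "'a::field poly"
  assumes "coeff s 0 = 0"
  shows "coeff (fst ((Tstep a c s d ^^ k) (1,0))) 0 = coeff a 0 ^ k"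
  by (induction k) (auto simp: Tstep_def coeff_mult_0 assms)

lemma T_res2:
  fixes a c s d :: "'a::field poly"
  assumes "coeff s 0 = 0"
  shows "coeff (fst ((Tstep a c s d ^^ k) (0,1))) 0 = 0 \<and> coeff (snd ((Tstep a c s d ^^ k) (0,1))) 0 = coeff d 0 ^ k"
  by (induction k) (auto simp: Tstep_def coeff_mult_0 assms)



lemma mat_zeroI:
  fixes M :: "'a::field mat"
  assumes M: "M \<in> carrier_mat n n" and h: "\<And>v. v \<in> carrier_vec n \<Longrightarrow> M *\<^sub>v v = 0\<^sub>v n"
  shows "M = 0\<^sub>m n n"
proof (rule eq_matI)
  fix i j assume i: "i < dim_row (0\<^sub>m n n :: 'a mat)" and j: "j < dim_col (0\<^sub>m n n :: 'a mat)"
  have "M $$ (i,j) = (M * 1\<^sub>m n) $$ (i,j)" using M by simp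
  also have "\<dots> = row M i \<bullet> col (1\<^sub>m n) j" using M i j by simp
  also have "col (1\<^sub>m n) j = unit_vec n j" using j by simp
  also have "row M i \<bullet> unit_vec n j = (M *\<^sub>v unit_vec n j) $ i" using M i by simp
  also have "\<dots> = 0" using h[of "unit_vec n j"] i by simp
  finally show "M $$ (i,j) = 0\<^sub>m n n $$ (i,j)" using i j by simp
qed (use M in auto)

lemma three_kernel:
  fixes A :: "'a::field mat"
  assumes A: "A \<in> carrier_mat n n" and u: "u1 \<in> carrier_vec n" "u2 \<in> carrier_vec n" "u3 \<in> carrier_vec n"
   and k: "A *\<^sub>v u1 = 0\<^sub>v n" "A *\<^sub>v u2 = 0\<^sub>v n" "A *\<^sub>v u3 = 0\<^sub>v n"
   and ind: "\<And>x y z. x \<cdot>\<^sub>v u1 + y \<cdot>\<^sub>v u2 + z \<cdot>\<^sub>v u3 = 0\<^sub>v n \<Longrightarrow> x = 0 \<and> y = 0 \<and> z = 0"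
  shows "3 \<le> kernel_dim A"
proof -
  interpret kernel n n A by unfold_locales (rule A)
  have d12: "u1 \<noteq> u2"
  proof
    assume "u1 = u2"
    hence "1 \<cdot>\<^sub>v u1 + (-1) \<cdot>\<^sub>v u2 + 0 \<cdot>\<^sub>v u3 = 0\<^sub>v n" using u by (intro eq_vecI) auto
    from ind[OF this] show False by simp
  qed
  have d13: "u1 \<noteq> u3"
  proof
    assume "u1 = u3"
    hence "1 \<cdot>\<^sub>v u1 + 0 \<cdot>\<^sub>v u2 + (-1) \<cdot>\<^sub>v u3 = 0\<^sub>v n" using u by (intro eq_vecI) auto
    from ind[OF this] show False by simp
  qed
  have d23: "u2 \<noteq> u3"
  proof
    assume "u2 = u3"
    hence "0 \<cdot>\<^sub>v u1 + 1 \<cdot>\<^sub>v u2 + (-1) \<cdot>\<^sub>v u3 = 0\<^sub>v n" using u by (intro eq_vecI) auto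
    from ind[OF this] show False by simp
  qed
  define S where "S = {u1,u2,u3}"
  have Sc: "S \<subseteq> carrier_vec n" using u by (auto simp: S_def)
  have Sk: "S \<subseteq> mat_kernel A" using u k A by (auto simp: S_def intro: mat_kernelI)
  have cardS: "card S = 3" using d12 d13 d23 by (simp add: S_def)
  have "NC.lin_indpt S"
    apply (rule NC.finite_lin_indpt2)
    subgoal by (simp add: S_def)
    subgoal using Sc by simp
    subgoal premises prems for a
  proof -
    have lc: "NC.lincomb a S = 0\<^sub>v n" using prems by simp
    have "a u1 \<cdot>\<^sub>v u1 + a u2 \<cdot>\<^sub>v u2 + a u3 \<cdot>\<^sub>v u3 = 0\<^sub>v n"
    proof (rule eq_vecI)
      fix i assume i: "i < dim_vec (0\<^sub>v n :: 'a vec)"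
      hence i: "i < n" by simp
      have "0 = NC.lincomb a S $ i" using lc i by simp
      also have "\<dots> = (\<Sum>x\<in>S. a x * x $ i)" by (rule NC.lincomb_index[OF i Sc])
      also have "\<dots> = a u1 * u1 $ i + a u2 * u2 $ i + a u3 * u3 $ i"
        using d12 d13 d23 by (simp add: S_def)
      finally show "(a u1 \<cdot>\<^sub>v u1 + a u2 \<cdot>\<^sub>v u2 + a u3 \<cdot>\<^sub>v u3) $ i = 0\<^sub>v n $ i"
        using i u by (simp add: add.assoc)
    qed (use u in simp)
    from ind[OF this] show ?thesis by (simp add: S_def)
  qed
  done
  hence li: "lin_indpt S" using lindep_same[OF Sk] by simp
  obtain Bs where Bs: "finite Bs" "basis Bs" using kernel_basis_exists[OF A] by auto
  have fd: "Ker.fin_dim" unfolding Ker.fin_dim_def using Bs unfolding Ker.basis_def by auto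
  have "card S \<le> dim" using Ker.li_le_dim(2)[OF fd Sk li] .
  thus ?thesis using cardS by simp
qed



lemma mult_zero_vec_r: "A \<in> carrier_mat nr nc \<Longrightarrow> A *\<^sub>v 0\<^sub>v nc = 0\<^sub>v nr"
  by (intro eq_vecI) (auto simp: scalar_prod_def)

lemma zero_mat_mult_vec: "v \<in> carrier_vec nc \<Longrightarrow> 0\<^sub>m nr nc *\<^sub>v v = 0\<^sub>v nr"
  by (intro eq_vecI) (auto simp: scalar_prod_def)

lemma pCons_split: "pCons x f = Polynomial.smult x 1 + pCons 0 (f::'a::field poly)"
  by (simp add: one_pCons)

lemma pCons0_tm: "pCons 0 f = tm 1 * (f::'a::field poly)"
  by (simp add: monom_Suc one_pCons)

locale chains =
  fixes B :: "'a::field mat" and n p q :: nat and \<phi> :: "'a poly \<Rightarrow> 'a poly \<Rightarrow> 'a vec"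
  assumes B: "B \<in> carrier_mat n n"
   and phi_carr: "\<And>f g. \<phi> f g \<in> carrier_vec n"
   and phi_add: "\<And>f g h k. \<phi> (f+h) (g+k) = \<phi> f g + \<phi> h k"
   and phi_smult: "\<And>c f g. \<phi> (Polynomial.smult c f) (Polynomial.smult c g) = c \<cdot>\<^sub>v \<phi> f g"
   and phi_B: "\<And>f g. B *\<^sub>v \<phi> f g = \<phi> (pCons 0 f) (pCons 0 g)"
   and phi_zero: "\<And>f g. \<phi> f g = 0\<^sub>v n \<longleftrightarrow> tm p dvd f \<and> tm q dvd g"
   and phi_surj: "\<And>v. v \<in> carrier_vec n \<Longrightarrow> \<exists>f g. v = \<phi> f g"
begin

lemma phi00: "\<phi> 0 0 = 0\<^sub>v n" using phi_zero by simp

lemma phi_split: "\<phi> f g = \<phi> f 0 + \<phi> 0 g"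
  using phi_add[of f 0 0 g] by simp

lemma phi_pConsL: "\<phi> (pCons x f) 0 = x \<cdot>\<^sub>v \<phi> 1 0 + B *\<^sub>v \<phi> f 0"
proof -
  have "\<phi> (pCons x f) 0 = \<phi> (Polynomial.smult x 1 + pCons 0 f) (Polynomial.smult x 0 + pCons 0 0)"
    using pCons_split[of x f] by simp
  also have "\<dots> = x \<cdot>\<^sub>v \<phi> 1 0 + B *\<^sub>v \<phi> f 0" by (simp only: phi_add phi_smult phi_B)
  finally show ?thesis .
qed

lemma phi_pConsR: "\<phi> 0 (pCons x g) = x \<cdot>\<^sub>v \<phi> 0 1 + B *\<^sub>v \<phi> 0 g"
proof -
  have "\<phi> 0 (pCons x g) = \<phi> (Polynomial.smult x 0 + pCons 0 0) (Polynomial.smult x 1 + pCons 0 g)"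
    using pCons_split[of x g] by simp
  also have "\<dots> = x \<cdot>\<^sub>v \<phi> 0 1 + B *\<^sub>v \<phi> 0 g" by (simp only: phi_add phi_smult phi_B)
  finally show ?thesis .
qed

lemma Bpow: "B ^\<^sub>m k *\<^sub>v \<phi> f g = \<phi> (tm k * f) (tm k * g)"
proof (induction k arbitrary: f g)
  case 0
  then show ?case using phi_carr[of f g] B by (simp add: carrier_matD)
next
  case (Suc k)
  have "B ^\<^sub>m Suc k *\<^sub>v \<phi> f g = B ^\<^sub>m k *\<^sub>v (B *\<^sub>v \<phi> f g)"
    using assoc_mult_mat_vec[OF pow_carrier_mat[OF B] B phi_carr] by simp
  also have "\<dots> = \<phi> (tm k * (tm 1 * f)) (tm k * (tm 1 * g))" by (simp add: phi_B Suc pCons0_tm)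
  also have "\<dots> = \<phi> (tm (Suc k) * f) (tm (Suc k) * g)" by (simp add: mult.assoc[symmetric] mult_monom)
  finally show ?case .
qed

context
  fixes A :: "'a mat"
  assumes A: "A \<in> carrier_mat n n" and AB: "A * B = B * A"
begin

lemma A_B_vec: "v \<in> carrier_vec n \<Longrightarrow> A *\<^sub>v (B *\<^sub>v v) = B *\<^sub>v (A *\<^sub>v v)"
proof -
  assume v: "v \<in> carrier_vec n"
  have "A *\<^sub>v (B *\<^sub>v v) = (A * B) *\<^sub>v v" using A B v by simp
  also have "\<dots> = (B * A) *\<^sub>v v" by (simp add: AB)
  also have "\<dots> = B *\<^sub>v (A *\<^sub>v v)" using A B v by simp
  finally show ?thesis .
qed

lemma A_Bpow_vec: "v \<in> carrier_vec n \<Longrightarrow> A *\<^sub>v (B ^\<^sub>m k *\<^sub>v v) = B ^\<^sub>m k *\<^sub>v (A *\<^sub>v v)"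
proof (induction k arbitrary: v)
  case 0
  then show ?case using A B by (simp add: carrier_matD)
next
  case (Suc k)
  have "A *\<^sub>v (B ^\<^sub>m Suc k *\<^sub>v v) = A *\<^sub>v (B ^\<^sub>m k *\<^sub>v (B *\<^sub>v v))"
    using assoc_mult_mat_vec[OF pow_carrier_mat[OF B] B Suc.prems] by simp
  also have "\<dots> = B ^\<^sub>m k *\<^sub>v (A *\<^sub>v (B *\<^sub>v v))" using Suc B by simp
  also have "\<dots> = B ^\<^sub>m k *\<^sub>v (B *\<^sub>v (A *\<^sub>v v))" using A_B_vec Suc.prems by simp
  also have "\<dots> = B ^\<^sub>m Suc k *\<^sub>v (A *\<^sub>v v)"
    using assoc_mult_mat_vec[OF pow_carrier_mat[OF B] B mult_mat_vec_carrier[OF A Suc.prems]] by simp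
  finally show ?case .
qed

context
  fixes a c s d :: "'a poly"
  assumes Ae1: "A *\<^sub>v \<phi> 1 0 = \<phi> a c" and Ae2: "A *\<^sub>v \<phi> 0 1 = \<phi> s d"
begin

lemma phi_A_L: "A *\<^sub>v \<phi> f 0 = \<phi> (f * a) (f * c)"
proof (induction f rule: pCons_induct)
  case 0
  then show ?case using A by (simp add: phi00 mult_zero_vec_r)
next
  case (pCons x f)
  have "A *\<^sub>v \<phi> (pCons x f) 0 = A *\<^sub>v (x \<cdot>\<^sub>v \<phi> 1 0) + A *\<^sub>v (B *\<^sub>v \<phi> f 0)"
    unfolding phi_pConsL using A B phi_carr by (simp add: mult_add_distrib_mat_vec)
  also have "\<dots> = x \<cdot>\<^sub>v \<phi> a c + B *\<^sub>v \<phi> (f * a) (f * c)"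
    using A_B_vec[of "\<phi> f 0"] pCons.IH phi_carr A by (simp add: mult_mat_vec Ae1)
  also have "\<dots> = \<phi> (Polynomial.smult x a + pCons 0 (f * a)) (Polynomial.smult x c + pCons 0 (f * c))"
    by (simp only: phi_add phi_smult phi_B)
  finally show ?case by simp
qed

lemma phi_A_R: "A *\<^sub>v \<phi> 0 g = \<phi> (g * s) (g * d)"
proof (induction g rule: pCons_induct)
  case 0
  then show ?case using A by (simp add: phi00 mult_zero_vec_r)
next
  case (pCons x g)
  have "A *\<^sub>v \<phi> 0 (pCons x g) = A *\<^sub>v (x \<cdot>\<^sub>v \<phi> 0 1) + A *\<^sub>v (B *\<^sub>v \<phi> 0 g)"
    unfolding phi_pConsR using A B phi_carr by (simp add: mult_add_distrib_mat_vec)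
  also have "\<dots> = x \<cdot>\<^sub>v \<phi> s d + B *\<^sub>v \<phi> (g * s) (g * d)"
    using A_B_vec[of "\<phi> 0 g"] pCons.IH phi_carr A by (simp add: mult_mat_vec Ae2)
  also have "\<dots> = \<phi> (Polynomial.smult x s + pCons 0 (g * s)) (Polynomial.smult x d + pCons 0 (g * d))"
    by (simp only: phi_add phi_smult phi_B)
  finally show ?case by simp
qed

lemma phi_A: "A *\<^sub>v \<phi> f g = \<phi> (f * a + g * s) (f * c + g * d)"
proof -
  have "A *\<^sub>v \<phi> f g = A *\<^sub>v \<phi> f 0 + A *\<^sub>v \<phi> 0 g"
    using phi_split[of f g] A phi_carr by (simp add: mult_add_distrib_mat_vec)
  also have "\<dots> = \<phi> (f * a + g * s) (f * c + g * d)" by (simp add: phi_A_L phi_A_R phi_add)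
  finally show ?thesis .
qed

lemma phi_Apow: "A ^\<^sub>m k *\<^sub>v \<phi> f g = \<phi> (fst ((Tstep a c s d ^^ k) (f,g))) (snd ((Tstep a c s d ^^ k) (f,g)))"
proof (induction k arbitrary: f g)
  case 0
  then show ?case using phi_carr[of f g] A by (simp add: carrier_matD)
next
  case (Suc k)
  have "A ^\<^sub>m Suc k *\<^sub>v \<phi> f g = A ^\<^sub>m k *\<^sub>v (A *\<^sub>v \<phi> f g)"
    using assoc_mult_mat_vec[OF pow_carrier_mat[OF A] A phi_carr] by simp
  also have "\<dots> = A ^\<^sub>m k *\<^sub>v \<phi> (f * a + g * s) (f * c + g * d)" by (simp add: phi_A)
  also have "\<dots> = \<phi> (fst ((Tstep a c s d ^^ Suc k) (f,g))) (snd ((Tstep a c s d ^^ Suc k) (f,g)))"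
    unfolding Suc funpow_Suc_right o_def by (simp add: Tstep_def)
  finally show ?case .
qed

end
end

lemma core:
  assumes pq: "q + 3 \<le> p" "1 \<le> q" and A: "A \<in> carrier_mat n n" and AB: "A * B = B * A"
    and nil: "A ^\<^sub>m N = 0\<^sub>m n n" and kd: "kernel_dim A \<le> 2"
  shows "A ^\<^sub>m p = 0\<^sub>m n n \<and> A ^\<^sub>m (p-1) \<noteq> 0\<^sub>m n n"
proof -
  obtain a c where Ae1: "A *\<^sub>v \<phi> 1 0 = \<phi> a c"
    using phi_surj[OF mult_mat_vec_carrier[OF A phi_carr]] by blast
  obtain s d where Ae2: "A *\<^sub>v \<phi> 0 1 = \<phi> s d"
    using phi_surj[OF mult_mat_vec_carrier[OF A phi_carr]] by blast
  note PA = phi_A[OF A AB Ae1 Ae2] and PP = phi_Apow[OF A AB Ae1 Ae2]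
  let ?T = "Tstep a c s d"
  have "A *\<^sub>v (B ^\<^sub>m q *\<^sub>v \<phi> 0 1) = B ^\<^sub>m q *\<^sub>v (A *\<^sub>v \<phi> 0 1)" by (rule A_Bpow_vec[OF A AB phi_carr])
  moreover have "B ^\<^sub>m q *\<^sub>v \<phi> 0 1 = 0\<^sub>v n" unfolding Bpow by (simp add: phi_zero)
  ultimately have "\<phi> (tm q * s) (tm q * d) = 0\<^sub>v n" using A by (simp add: Bpow Ae2 mult_zero_vec_r)
  hence "tm (q + (p-q)) dvd tm q * s" using phi_zero pq by simp
  hence s_dvd: "tm (p-q) dvd s" using tm_cancel by blast
  have s3: "tm 3 dvd s" using tm_le[OF _ s_dvd] pq by simp
  have s2: "tm 2 dvd s" using tm_le[OF _ s_dvd] pq by simp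
  have s0: "coeff s 0 = 0" using s_dvd pq by (auto simp: monom_1_dvd_iff')
  have "A ^\<^sub>m N *\<^sub>v \<phi> 1 0 = 0\<^sub>v n" using nil zero_mat_mult_vec[OF phi_carr] by simp
  hence "tm p dvd fst ((?T ^^ N) (1,0))" unfolding PP using phi_zero by simp
  hence "coeff (fst ((?T ^^ N) (1,0))) 0 = 0" using pq by (auto simp: monom_1_dvd_iff')
  hence "coeff a 0 ^ N = 0" using T_res1[OF s0] by simp
  hence a0: "coeff a 0 = 0" by simp
  have "A ^\<^sub>m N *\<^sub>v \<phi> 0 1 = 0\<^sub>v n" using nil zero_mat_mult_vec[OF phi_carr] by simp
  hence "tm q dvd snd ((?T ^^ N) (0,1))" unfolding PP using phi_zero by simp
  hence "coeff (snd ((?T ^^ N) (0,1))) 0 = 0" using pq by (auto simp: monom_1_dvd_iff')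
  hence "coeff d 0 ^ N = 0" using T_res2[OF s0] by simp
  hence d0: "coeff d 0 = 0" by simp
  have a1: "tm 1 dvd a" using a0 by (auto simp: monom_1_dvd_iff')
  have d1: "tm 1 dvd d" using d0 by (auto simp: monom_1_dvd_iff')
  have up: "A ^\<^sub>m p = 0\<^sub>m n n"
  proof (rule mat_zeroI[OF pow_carrier_mat[OF A]])
    fix v :: "'a vec" assume "v \<in> carrier_vec n"
    then obtain f g where v: "v = \<phi> f g" using phi_surj by blast
    from T_upper[OF a1 d1 s2, where k=p and x="(f,g)" and c=c]
    have h1: "tm p dvd fst ((?T ^^ p) (f,g))" and h2: "tm (1 + (p-1)) dvd tm 1 * snd ((?T ^^ p) (f,g))"
      using pq by auto
    from h2 have "tm (p-1) dvd snd ((?T ^^ p) (f,g))" using tm_cancel by blast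
    moreover have "q \<le> p - 1" using pq by simp
    ultimately have "tm q dvd snd ((?T ^^ p) (f,g))" by (rule tm_le[rotated])
    thus "A ^\<^sub>m p *\<^sub>v v = 0\<^sub>v n" unfolding v PP using h1 phi_zero by simp
  qed
  have al: "coeff a 1 \<noteq> 0"
  proof
    assume a11: "coeff a 1 = 0"
    have ca: "\<forall>j<2. coeff a j = 0" using a0 a11 by (auto simp: less_2_cases_iff)
    hence a2: "tm 2 dvd a" by (simp add: monom_1_dvd_iff')
    have cs: "\<forall>j<p-q. coeff s j = 0" using s_dvd by (simp add: monom_1_dvd_iff')
    define \<sigma> where "\<sigma> = coeff s (p-q)"
    define \<alpha> where "\<alpha> = coeff a 2"
    define x where "x = (if \<sigma> = 0 \<and> \<alpha> = 0 then 0 else \<sigma>)"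
    define y where "y = (if \<sigma> = 0 \<and> \<alpha> = 0 then 1 else -\<alpha>)"
    have xy: "x \<noteq> 0 \<or> y \<noteq> 0" by (auto simp: x_def y_def)
    have xy0: "x * \<alpha> + y * \<sigma> = 0" by (auto simp: x_def y_def mult.commute)
    define u1 where "u1 = \<phi> (tm (p-1)) 0"
    define u2 where "u2 = \<phi> (tm (p-2)) 0"
    define u3 where "u3 = \<phi> (monom x (p-3)) (monom y (q-1))"
    have k1: "A *\<^sub>v u1 = 0\<^sub>v n"
    proof -
      have "tm (p-1+1) dvd tm (p-1) * a" by (rule tm_dvd_mult[OF dvd_refl a1])
      hence "tm p dvd tm (p-1) * a" using pq by simp
      moreover have "tm q dvd tm (p-1)" using pq by (intro tm_le[OF _ dvd_refl]) simp
      hence "tm q dvd tm (p-1) * c" by (rule dvd_mult2)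
      ultimately show ?thesis unfolding u1_def PA using phi_zero by simp
    qed
    have k2: "A *\<^sub>v u2 = 0\<^sub>v n"
    proof -
      have "tm (p-2+2) dvd tm (p-2) * a" by (rule tm_dvd_mult[OF dvd_refl a2])
      moreover have "p-2+2 = p" using pq by arith
      ultimately have "tm p dvd tm (p-2) * a" by metis
      moreover have "tm q dvd tm (p-2)" using pq by (intro tm_le[OF _ dvd_refl]) simp
      hence "tm q dvd tm (p-2) * c" by (rule dvd_mult2)
      ultimately show ?thesis unfolding u2_def PA using phi_zero by simp
    qed
    have k3: "A *\<^sub>v u3 = 0\<^sub>v n"
    proof -
      have "\<forall>k<p. coeff (monom x (p-3) * a + monom y (q-1) * s) k = 0"
      proof (intro allI impI)
        fix k assume k: "k < p"
        show "coeff (monom x (p-3) * a + monom y (q-1) * s) k = 0"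
        proof (cases "k = p - 1")
          case True
          hence e1: "k - (p-3) = 2" "k - (q-1) = p - q" "\<not> k < p-3" "\<not> k < q-1" using pq by auto
          show ?thesis using e1 xy0 unfolding \<alpha>_def \<sigma>_def by (simp add: coeff_monom_mult)
        next
          case False
          hence "k - (p-3) < 2" "k - (q-1) < p-q" using k pq by auto
          thus ?thesis using ca cs by (simp add: coeff_monom_mult)
        qed
      qed
      hence "tm p dvd monom x (p-3) * a + monom y (q-1) * s" by (simp add: monom_1_dvd_iff')
      moreover have "tm q dvd monom x (p-3)" using pq by (intro tm_le[OF _ tm_monom]) simp
      hence "tm q dvd monom x (p-3) * c" by (rule dvd_mult2)
      moreover have "tm q dvd monom y (q-1) * d"
        using tm_dvd_mult[OF tm_monom d1, of "q-1" y] pq by simp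
      ultimately show ?thesis unfolding u3_def PA using phi_zero by simp
    qed
    have ind: "\<xi> = 0 \<and> \<eta> = 0 \<and> \<zeta> = 0" if h: "\<xi> \<cdot>\<^sub>v u1 + \<eta> \<cdot>\<^sub>v u2 + \<zeta> \<cdot>\<^sub>v u3 = 0\<^sub>v n" for \<xi> \<eta> \<zeta>
    proof -
      have "\<xi> \<cdot>\<^sub>v u1 + \<eta> \<cdot>\<^sub>v u2 + \<zeta> \<cdot>\<^sub>v u3 =
        \<phi> (Polynomial.smult \<xi> (tm (p-1)) + Polynomial.smult \<eta> (tm (p-2)) + Polynomial.smult \<zeta> (monom x (p-3)))
          (Polynomial.smult \<xi> 0 + Polynomial.smult \<eta> 0 + Polynomial.smult \<zeta> (monom y (q-1)))"
        unfolding u1_def u2_def u3_def by (simp only: phi_smult[symmetric] phi_add[symmetric])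
      with h have F: "tm p dvd Polynomial.smult \<xi> (tm (p-1)) + Polynomial.smult \<eta> (tm (p-2)) + Polynomial.smult \<zeta> (monom x (p-3))"
        and G: "tm q dvd Polynomial.smult \<xi> 0 + Polynomial.smult \<eta> 0 + Polynomial.smult \<zeta> (monom y (q-1))"
        using phi_zero by auto
      have ar: "p - 1 < p" "p - 2 < p" "p - 3 < p" "p - 2 \<noteq> p - 1" "p - 3 \<noteq> p - 1" "p - 3 \<noteq> p - 2" "q - 1 < q"
        using pq by auto
      define Fp where "Fp = Polynomial.smult \<xi> (tm (p-1)) + Polynomial.smult \<eta> (tm (p-2)) + Polynomial.smult \<zeta> (monom x (p-3))"
      define Gp where "Gp = Polynomial.smult \<xi> 0 + Polynomial.smult \<eta> 0 + Polynomial.smult \<zeta> (monom y (q-1))"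
      have Fc: "\<forall>k<p. coeff Fp k = 0" using F unfolding Fp_def monom_1_dvd_iff' .
      have Gc: "\<forall>k<q. coeff Gp k = 0" using G unfolding Gp_def monom_1_dvd_iff' .
      have "coeff Fp (p-1) = \<xi>" using ar by (simp add: Fp_def coeff_monom)
      with Fc ar have c1: "\<xi> = 0" by auto
      have "coeff Fp (p-2) = \<eta>" using ar by (simp add: Fp_def coeff_monom)
      with Fc ar have c2: "\<eta> = 0" by auto
      have "coeff Fp (p-3) = \<zeta> * x" using ar by (simp add: Fp_def coeff_monom)
      with Fc ar have c3: "\<zeta> * x = 0" by auto
      have "coeff Gp (q-1) = \<zeta> * y" using ar by (simp add: Gp_def coeff_monom)
      with Gc ar have c4: "\<zeta> * y = 0" by auto
      from c3 c4 xy have "\<zeta> = 0" by auto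
      with c1 c2 show ?thesis by simp
    qed
    have "3 \<le> kernel_dim A"
      by (rule three_kernel[OF A phi_carr phi_carr phi_carr k1[unfolded u1_def] k2[unfolded u2_def]
            k3[unfolded u3_def] ind[unfolded u1_def u2_def u3_def]])
    with kd show False by simp
  qed
  have "\<not> tm (Suc (p-1)) dvd fst ((?T ^^ (p-1)) (1,0))" by (rule T_lower_final[OF a0 d1 s3 al])
  hence "A ^\<^sub>m (p-1) *\<^sub>v \<phi> 1 0 \<noteq> 0\<^sub>v n" unfolding PP using phi_zero pq by simp
  hence "A ^\<^sub>m (p-1) \<noteq> 0\<^sub>m n n" using zero_mat_mult_vec[OF phi_carr] by auto
  with up show ?thesis by simp
qed

end

lemma chains_swap: assumes "chains B n p q \<phi>" shows "chains B n q p (\<lambda>f g. \<phi> g f)"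
proof -
  interpret chains B n p q \<phi> by fact
  show ?thesis
  proof (unfold_locales)
    show "\<exists>f g. v = \<phi> g f" if "v \<in> carrier_vec n" for v using phi_surj[OF that] by blast
  qed (auto simp: B phi_carr phi_add phi_smult phi_B phi_zero)
qed

lemma jm2_index:
  assumes i: "i < r1 + r2" and j: "j < r1 + r2"
  shows "jordan_matrix [(r1,0::'a::field),(r2,0)] $$ (i,j) = (if Suc i = j \<and> j \<noteq> r1 then 1 else 0)"
  using i j unfolding jordan_matrix_def by (auto simp: Let_def)

definition wv :: "nat \<Rightarrow> nat \<Rightarrow> 'a::field poly \<Rightarrow> 'a poly \<Rightarrow> 'a vec" where
  "wv r1 r2 f g = vec (r1 + r2) (\<lambda>i. if i < r1 then coeff f (r1 - 1 - i) else coeff g (r2 - 1 - (i - r1)))"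

lemma wv_carr: "wv r1 r2 f g \<in> carrier_vec (r1 + r2)" by (simp add: wv_def)

lemma jm2_mult:
  assumes w: "w \<in> carrier_vec (r1 + r2)" and i: "i < r1 + r2"
  shows "(jordan_matrix [(r1,0::'a::field),(r2,0)] *\<^sub>v w) $ i = (if Suc i < r1 + r2 \<and> Suc i \<noteq> r1 then w $ Suc i else 0)"
proof -
  let ?J = "jordan_matrix [(r1,0::'a::field),(r2,0)]"
  have "(?J *\<^sub>v w) $ i = (\<Sum>j\<in>{0..<r1+r2}. row ?J i $ j * w $ j)"
    using i w by (simp add: scalar_prod_def)
  also have "\<dots> = (\<Sum>j\<in>{0..<r1+r2}. if j = Suc i then (if Suc i \<noteq> r1 then w $ j else 0) else 0)"
    by (intro sum.cong refl) (use i in \<open>auto simp: jm2_index\<close>)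
  also have "\<dots> = (if Suc i < r1 + r2 \<and> Suc i \<noteq> r1 then w $ Suc i else 0)"
    by (simp add: sum.delta')
  finally show ?thesis .
qed

lemma jm2_wv:
  assumes r: "1 \<le> r1" "1 \<le> r2"
  shows "jordan_matrix [(r1,0::'a::field),(r2,0)] *\<^sub>v wv r1 r2 f g = wv r1 r2 (pCons 0 f) (pCons 0 g)"
proof (rule eq_vecI)
  fix i assume "i < dim_vec (wv r1 r2 (pCons 0 f) (pCons 0 g))"
  hence i: "i < r1 + r2" by (simp add: wv_def)
  show "(jordan_matrix [(r1,0::'a::field),(r2,0)] *\<^sub>v wv r1 r2 f g) $ i = wv r1 r2 (pCons 0 f) (pCons 0 g) $ i"
    unfolding jm2_mult[OF wv_carr i]
  proof (cases "i < r1")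
    case True
    show "(if Suc i < r1 + r2 \<and> Suc i \<noteq> r1 then wv r1 r2 f g $ Suc i else 0) = wv r1 r2 (pCons 0 f) (pCons 0 g) $ i"
    proof (cases "Suc i = r1")
      case True
      then show ?thesis using i by (simp add: wv_def)
    next
      case False
      hence e: "r1 - 1 - i = Suc (r1 - 1 - Suc i)" "Suc i < r1" using \<open>i < r1\<close> by arith+
      show ?thesis using i \<open>i < r1\<close> False e by (simp add: wv_def)
    qed
  next
    case False
    show "(if Suc i < r1 + r2 \<and> Suc i \<noteq> r1 then wv r1 r2 f g $ Suc i else 0) = wv r1 r2 (pCons 0 f) (pCons 0 g) $ i"
    proof (cases "Suc i = r1 + r2")
      case True
      hence "r2 - 1 - (i - r1) = 0" by arith
      then show ?thesis using i False True by (simp add: wv_def)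
    next
      case F2: False
      hence e: "r2 - 1 - (i - r1) = Suc (r2 - 1 - (Suc i - r1))" "Suc i < r1 + r2" "Suc i \<noteq> r1" "\<not> Suc i < r1"
        using i False by arith+
      show ?thesis using i False e by (simp add: wv_def)
    qed
  qed
qed (simp add: wv_def)

lemma wv_zero:
  "wv r1 r2 f g = 0\<^sub>v (r1+r2) \<longleftrightarrow> tm r1 dvd f \<and> tm r2 dvd (g :: 'a::field poly)"
proof
  assume h: "wv r1 r2 f g = 0\<^sub>v (r1+r2)"
  have "\<forall>k<r1. coeff f k = 0"
  proof (intro allI impI)
    fix k assume k: "k < r1"
    define j where "j = r1 - 1 - k"
    have j: "j < r1" "r1 - 1 - j = k" using k by (simp_all add: j_def)
    have "wv r1 r2 f g $ j = 0" using h j by simp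
    thus "coeff f k = 0" using j by (simp add: wv_def)
  qed
  moreover have "\<forall>k<r2. coeff g k = 0"
  proof (intro allI impI)
    fix k assume k: "k < r2"
    define j where "j = r1 + (r2 - 1 - k)"
    have j: "j < r1 + r2" "\<not> j < r1" "r2 - 1 - (j - r1) = k" using k by (simp_all add: j_def)
    have "wv r1 r2 f g $ j = 0" using h j by simp
    thus "coeff g k = 0" using j by (simp add: wv_def)
  qed
  ultimately show "tm r1 dvd f \<and> tm r2 dvd g" by (simp add: monom_1_dvd_iff')
next
  assume "tm r1 dvd f \<and> tm r2 dvd g"
  hence f: "\<forall>k<r1. coeff f k = 0" and g: "\<forall>k<r2. coeff g k = 0" by (auto simp: monom_1_dvd_iff')
  show "wv r1 r2 f g = 0\<^sub>v (r1+r2)"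
  proof (rule eq_vecI)
    fix i assume "i < dim_vec (0\<^sub>v (r1 + r2) :: 'a vec)"
    hence i: "i < r1 + r2" by simp
    show "wv r1 r2 f g $ i = 0\<^sub>v (r1 + r2) $ i"
      using i f g by (auto simp: wv_def)
  qed (simp add: wv_def)
qed

lemma wv_surj:
  assumes u: "u \<in> carrier_vec (r1 + r2)"
  shows "\<exists>f g. u = wv r1 r2 f (g :: 'a::field poly)"
proof -
  define f where "f = Poly (map (\<lambda>k. u $ (r1 - 1 - k)) [0..<r1])"
  define g where "g = Poly (map (\<lambda>k. u $ (r1 + (r2 - 1 - k))) [0..<r2])"
  have "u = wv r1 r2 f g"
  proof (rule eq_vecI)
    fix i assume "i < dim_vec (wv r1 r2 f g)"
    hence i: "i < r1 + r2" by (simp add: wv_def)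
    show "u $ i = wv r1 r2 f g $ i"
    proof (cases "i < r1")
      case True
      define j where "j = r1 - 1 - i"
      have e: "r1 - 1 - j = i" "j < r1" using True by (simp_all add: j_def)
      have "coeff f j = u $ i" using e by (simp add: f_def nth_default_nth)
      thus ?thesis using True i by (simp add: wv_def j_def)
    next
      case False
      define j where "j = r2 - 1 - (i - r1)"
      have e: "r1 + (r2 - 1 - j) = i" "j < r2" using False i by (simp_all add: j_def)
      have "coeff g j = u $ i" using e by (simp add: g_def nth_default_nth)
      thus ?thesis using False i by (simp add: wv_def j_def)
    qed
  qed (use u in \<open>simp add: wv_def\<close>)
  thus ?thesis by blast
qed

lemma bridge:
  fixes B :: "'a::field mat"
  assumes jnf: "jordan_nf B [(r1,0),(r2,0)]" and r: "1 \<le> r1" "1 \<le> r2" and B: "B \<in> carrier_mat n n"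
  shows "n = r1 + r2 \<and> (\<exists>\<phi>. chains B n r1 r2 \<phi>)"
proof -
  let ?J = "jordan_matrix [(r1,0::'a),(r2,0)]"
  from jnf obtain P Q where wit: "similar_mat_wit B ?J P Q" unfolding jordan_nf_def similar_mat_def by blast
  have nB: "n = dim_row B" using B by simp
  note W = similar_mat_witD[OF nB wit]
  have Jc: "?J \<in> carrier_mat n n" by (rule W(5))
  have "dim_row ?J = n" using Jc by (rule carrier_matD)
  hence n: "n = r1 + r2" by simp
  have P: "P \<in> carrier_mat n n" and Q: "Q \<in> carrier_mat n n" and PQ: "P * Q = 1\<^sub>m n" and QP: "Q * P = 1\<^sub>m n"
    and BPJQ: "B = P * ?J * Q" by (rule W(6), rule W(7), rule W(1), rule W(2), rule W(3))
  define \<phi> where "\<phi> f g = P *\<^sub>v wv r1 r2 f g" for f g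
  have wc: "wv r1 r2 f g \<in> carrier_vec n" for f g using wv_carr n by simp
  have "chains B n r1 r2 \<phi>"
  proof (unfold_locales)
    show "B \<in> carrier_mat n n" by fact
    show "\<phi> f g \<in> carrier_vec n" for f g using mult_mat_vec_carrier[OF P wc] by (simp add: \<phi>_def)
    show "\<phi> (f+h) (g+k) = \<phi> f g + \<phi> h k" for f g h k
    proof -
      have "wv r1 r2 (f+h) (g+k) = wv r1 r2 f g + wv r1 r2 h k"
        by (intro eq_vecI) (auto simp: wv_def)
      thus ?thesis unfolding \<phi>_def using mult_add_distrib_mat_vec[OF P wc wc] by simp
    qed
    show "\<phi> (Polynomial.smult c f) (Polynomial.smult c g) = c \<cdot>\<^sub>v \<phi> f g" for c f g
    proof -
      have "wv r1 r2 (Polynomial.smult c f) (Polynomial.smult c g) = c \<cdot>\<^sub>v wv r1 r2 f g"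
        by (intro eq_vecI) (auto simp: wv_def)
      thus ?thesis unfolding \<phi>_def using mult_mat_vec[OF P wc] by simp
    qed
    show "B *\<^sub>v \<phi> f g = \<phi> (pCons 0 f) (pCons 0 g)" for f g
    proof -
      have xc: "P *\<^sub>v wv r1 r2 f g \<in> carrier_vec n" by (rule mult_mat_vec_carrier[OF P wc])
      have yc: "Q *\<^sub>v (P *\<^sub>v wv r1 r2 f g) \<in> carrier_vec n" by (rule mult_mat_vec_carrier[OF Q xc])
      have "B *\<^sub>v \<phi> f g = (P * ?J * Q) *\<^sub>v (P *\<^sub>v wv r1 r2 f g)" unfolding \<phi>_def BPJQ ..
      also have "\<dots> = (P * ?J) *\<^sub>v (Q *\<^sub>v (P *\<^sub>v wv r1 r2 f g))"
        by (rule assoc_mult_mat_vec[OF mult_carrier_mat[OF P Jc] Q xc])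
      also have "\<dots> = P *\<^sub>v (?J *\<^sub>v (Q *\<^sub>v (P *\<^sub>v wv r1 r2 f g)))"
        by (rule assoc_mult_mat_vec[OF P Jc yc])
      finally have "B *\<^sub>v \<phi> f g = P *\<^sub>v (?J *\<^sub>v (Q *\<^sub>v (P *\<^sub>v wv r1 r2 f g)))" .
      also have "Q *\<^sub>v (P *\<^sub>v wv r1 r2 f g) = wv r1 r2 f g"
        using assoc_mult_mat_vec[OF Q P wc, symmetric] QP one_mult_mat_vec[OF wc[of f g]] by simp
      finally show ?thesis unfolding \<phi>_def jm2_wv[OF r] .
    qed
    show "\<phi> f g = 0\<^sub>v n \<longleftrightarrow> tm r1 dvd f \<and> tm r2 dvd g" for f g
    proof -
      have "P *\<^sub>v wv r1 r2 f g = 0\<^sub>v n \<longleftrightarrow> wv r1 r2 f g = 0\<^sub>v n"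
      proof
        assume h: "P *\<^sub>v wv r1 r2 f g = 0\<^sub>v n"
        have "wv r1 r2 f g = (Q * P) *\<^sub>v wv r1 r2 f g" using QP one_mult_mat_vec[OF wc[of f g]] by simp
        also have "\<dots> = Q *\<^sub>v (P *\<^sub>v wv r1 r2 f g)" using assoc_mult_mat_vec[OF Q P wc[of f g]] by simp
        also have "\<dots> = 0\<^sub>v n" using h Q by (simp add: mult_zero_vec_r)
        finally show "wv r1 r2 f g = 0\<^sub>v n" .
      qed (use P in \<open>simp add: mult_zero_vec_r\<close>)
      thus ?thesis unfolding \<phi>_def using wv_zero[of r1 r2 f g] n by simp
    qed
    show "\<exists>f g. v = \<phi> f g" if v: "v \<in> carrier_vec n" for v
    proof -
      have "Q *\<^sub>v v \<in> carrier_vec (r1 + r2)" using Q v n by simp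
      then obtain f g where fg: "Q *\<^sub>v v = wv r1 r2 f g" using wv_surj by blast
      have "v = (P * Q) *\<^sub>v v" using PQ v by simp
      also have "\<dots> = P *\<^sub>v (Q *\<^sub>v v)" using P Q v by simp
      finally show ?thesis unfolding \<phi>_def fg by blast
    qed
  qed
  with n show ?thesis by blast
qed

lemma kernel_dim_zero: "kernel_dim (0\<^sub>m n n :: 'a::field mat) = n"
proof -
  have "jordan_block n (0::'a) ^\<^sub>m n = 0\<^sub>m n n"
    unfolding jordan_block_zero_pow by (intro eq_matI) auto
  moreover have "kernel.dim n (jordan_block n (0::'a) ^\<^sub>m n) = n"
    using dim_kernel_zero_jordan_block_pow[of n n] by simp
  ultimately show ?thesis unfolding kernel_dim_def by simp
qed

lemma pow_zero_ge:
  fixes X :: "'a::field mat"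
  assumes X: "X \<in> carrier_mat n n" and K: "X ^\<^sub>m K = 0\<^sub>m n n" and j: "K \<le> j"
  shows "X ^\<^sub>m j = 0\<^sub>m n n"
  using j
proof (induction j)
  case 0
  then show ?case using K by simp
next
  case (Suc j)
  show ?case
  proof (cases "K \<le> j")
    case True
    then have "X ^\<^sub>m j = 0\<^sub>m n n" using Suc by simp
    then show ?thesis using X by simp
  next
    case False
    then have "K = Suc j" using Suc by simp
    then show ?thesis using K by simp
  qed
qed

lemma jm2_pow_zero:
  assumes "a \<le> k" "b \<le> k"
  shows "jordan_matrix [(a,0::'a::field),(b,0)] ^\<^sub>m k = 0\<^sub>m (a+b) (a+b)"
proof -
  have z: "jordan_block m (0::'a) ^\<^sub>m k = 0\<^sub>m m m" if "m \<le> k" for m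
    unfolding jordan_block_zero_pow using that by (intro eq_matI) auto
  have "jordan_matrix [(a,0::'a),(b,0)] ^\<^sub>m k = diag_block_mat [0\<^sub>m a a, 0\<^sub>m b b]"
    unfolding jordan_matrix_pow using z assms by simp
  also have "\<dots> = 0\<^sub>m (a+b) (a+b)" by (intro eq_matI) (auto simp: Let_def)
  finally show ?thesis .
qed

lemma char_matrix_0: "X \<in> carrier_mat n n \<Longrightarrow> char_matrix X 0 = (X :: 'a::field mat)"
  unfolding char_matrix_def by (intro eq_matI) auto

lemma shape_info:
  fixes X :: "'a::field mat"
  assumes X: "X \<in> carrier_mat n n" and nil: "nilpotent_mat X" and sh: "jordan_shape X {#x1,x2#}"
  shows "n = x1 + x2 \<and> 1 \<le> x1 \<and> 1 \<le> x2 \<and> (jordan_nf X [(x1,0),(x2,0)] \<or> jordan_nf X [(x2,0),(x1,0)])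
    \<and> (\<forall>k. kernel_dim (X ^\<^sub>m k) = min k x1 + min k x2) \<and> (\<forall>k. x1 \<le> k \<longrightarrow> x2 \<le> k \<longrightarrow> X ^\<^sub>m k = 0\<^sub>m n n)"
proof -
  obtain n_as where jnf: "jordan_nf X n_as" and ms: "mset (map fst n_as) = {#x1,x2#}"
    using sh unfolding jordan_shape_def by blast
  have "length n_as = 2" using arg_cong[OF ms, of size] by simp
  then obtain u v where "n_as = [u,v]"
    by (metis (no_types, opaque_lifting) One_nat_def Suc_length_conv length_0_conv numeral_2_eq_2)
  then obtain y1 e1 y2 e2 where nas: "n_as = [(y1,e1),(y2,e2)]" by (cases u, cases v) auto
  from ms nas have yx: "(y1 = x1 \<and> y2 = x2) \<or> (y1 = x2 \<and> y2 = x1)"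
    by (auto simp: add_eq_conv_ex)
  from jnf nas have y1: "1 \<le> y1" and y2: "1 \<le> y2" unfolding jordan_nf_def by auto
  from jnf obtain P Q where wit: "similar_mat_wit X (jordan_matrix n_as) P Q"
    unfolding jordan_nf_def similar_mat_def by blast
  have nX: "n = dim_row X" using X by simp
  have "jordan_matrix n_as \<in> carrier_mat n n" by (rule similar_mat_witD(5)[OF nX wit])
  hence "dim_row (jordan_matrix n_as) = n" by (rule carrier_matD)
  hence n: "n = y1 + y2" using nas by simp
  obtain K where K: "X ^\<^sub>m K = 0\<^sub>m n n" using nil X unfolding nilpotent_mat_def by auto
  have gen: "kernel_dim (X ^\<^sub>m k) = (if e1 = 0 then min k y1 else 0) + (if e2 = 0 then min k y2 else 0)" for k
  proof -
    have "kernel_dim (X ^\<^sub>m k) = dim_gen_eigenspace X 0 k"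
      unfolding dim_gen_eigenspace_def char_matrix_0[OF X] ..
    also have "\<dots> = (\<Sum> n \<leftarrow> map fst [(n, e)\<leftarrow>n_as . e = 0]. min k n)"
      by (rule dim_gen_eigenspace[OF jnf])
    finally show ?thesis using nas by simp
  qed
  have "X ^\<^sub>m (K + n) = 0\<^sub>m n n" by (rule pow_zero_ge[OF X K]) simp
  hence "kernel_dim (X ^\<^sub>m (K + n)) = n" by (simp add: kernel_dim_zero)
  hence "(if e1 = 0 then y1 else 0) + (if e2 = 0 then y2 else 0) = y1 + y2"
  proof -
    have g1: "kernel_dim (X ^\<^sub>m (K+n)) = (if e1 = 0 then min (K+n) y1 else 0) + (if e2 = 0 then min (K+n) y2 else 0)"
      by (rule gen)
    have m1': "min (K+n) y1 = y1" "min (K+n) y2 = y2" using n by simp_all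
    have "n = (if e1 = 0 then min (K+n) y1 else 0) + (if e2 = 0 then min (K+n) y2 else 0)"
      using g1 \<open>kernel_dim (X ^\<^sub>m (K + n)) = n\<close> by simp
    hence "n = (if e1 = 0 then y1 else 0) + (if e2 = 0 then y2 else 0)" unfolding m1' .
    thus ?thesis using n by simp
  qed
  hence e: "e1 = 0" "e2 = 0" using y1 y2 by (auto split: if_splits)
  have kd: "\<forall>k. kernel_dim (X ^\<^sub>m k) = min k x1 + min k x2"
    using gen e yx by auto
  have pz: "\<forall>k. x1 \<le> k \<longrightarrow> x2 \<le> k \<longrightarrow> X ^\<^sub>m k = 0\<^sub>m n n"
  proof (intro allI impI)
    fix k assume k: "x1 \<le> k" "x2 \<le> k"
    obtain P' Q' where P': "P' \<in> carrier_mat n n" and Q': "Q' \<in> carrier_mat n n"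
      and pw: "\<And>k. X ^\<^sub>m k = P' * (jordan_matrix n_as) ^\<^sub>m k * Q'"
      using jordan_nf_powE[OF X jnf] by metis
    have "jordan_matrix n_as ^\<^sub>m k = 0\<^sub>m n n"
      unfolding nas e n by (rule jm2_pow_zero) (use k yx in auto)
    thus "X ^\<^sub>m k = 0\<^sub>m n n" unfolding pw using P' Q' by simp
  qed
  have jo: "jordan_nf X [(x1,0),(x2,0)] \<or> jordan_nf X [(x2,0),(x1,0)]"
    using jnf nas e yx by auto
  show ?thesis using n yx y1 y2 kd pz jo by auto
qed

lemma key_dir:
  fixes B A :: "'a::field mat"
  assumes B: "B \<in> carrier_mat n n" and A: "A \<in> carrier_mat n n" and BA: "B * A = A * B"
    and nB: "nilpotent_mat B" and nA: "nilpotent_mat A"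
    and sB: "jordan_shape B {#p,q#}" and sA: "jordan_shape A {#m1,m2#}"
    and pq: "q + 3 \<le> p" "1 \<le> q" and m: "m2 \<le> m1"
  shows "m1 = p"
proof -
  note IB = shape_info[OF B nB sB] and IA = shape_info[OF A nA sA]
  have n: "n = p + q" using IB by simp
  have "\<exists>\<phi>. chains B n p q \<phi>"
  proof (cases "jordan_nf B [(p,0),(q,0)]")
    case True
    then show ?thesis using bridge[OF True _ _ B] IB by auto
  next
    case False
    hence "jordan_nf B [(q,0),(p,0)]" using IB by auto
    from bridge[OF this _ _ B] IB obtain \<phi> where "chains B n q p \<phi>" by auto
    from chains_swap[OF this] show ?thesis by blast
  qed
  then obtain \<phi> where ch: "chains B n p q \<phi>" by blast
  have m12: "1 \<le> m1" "1 \<le> m2" "n = m1 + m2" using IA by auto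
  have "kernel_dim (A ^\<^sub>m 1) = min 1 m1 + min 1 m2" using IA by blast
  moreover have "A ^\<^sub>m 1 = A" using A by simp
  ultimately have kd: "kernel_dim A \<le> 2" using m12 by simp
  obtain N where N: "A ^\<^sub>m N = 0\<^sub>m n n" using nA A unfolding nilpotent_mat_def by auto
  have c: "A ^\<^sub>m p = 0\<^sub>m n n \<and> A ^\<^sub>m (p-1) \<noteq> 0\<^sub>m n n"
    by (rule chains.core[OF ch pq A BA[symmetric] N kd])
  hence "kernel_dim (A ^\<^sub>m p) = n" by (simp add: kernel_dim_zero)
  hence "min p m1 + min p m2 = m1 + m2" using IA m12 by simp
  hence le: "m1 \<le> p" by linarith
  have "\<not> m1 \<le> p - 1"
  proof
    assume "m1 \<le> p - 1"
    hence "A ^\<^sub>m (p-1) = 0\<^sub>m n n" using IA m by auto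
    with c show False by simp
  qed
  with le show ?thesis by simp
qed

lemma jm2_props:
  assumes "1 \<le> b" "b \<le> a"
  shows "jordan_matrix [(a,0::'a::field),(b,0)] \<in> carrier_mat (a+b) (a+b) \<and>
    nilpotent_mat (jordan_matrix [(a,0::'a::field),(b,0)]) \<and> jordan_shape (jordan_matrix [(a,0::'a::field),(b,0)]) {#a,b#}"
proof -
  let ?J = "jordan_matrix [(a,0::'a::field),(b,0)]"
  have c: "?J \<in> carrier_mat (a+b) (a+b)" using jordan_matrix_carrier[of "[(a,0::'a::field),(b,0)]"] by simp
  have "?J ^\<^sub>m a = 0\<^sub>m (a+b) (a+b)" by (rule jm2_pow_zero) (use assms in auto)
  hence nil: "nilpotent_mat ?J" unfolding nilpotent_mat_def using c by auto
  have "jordan_nf ?J [(a,0),(b,0)]" unfolding jordan_nf_def using assms similar_mat_refl[OF c] by auto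
  hence "jordan_shape ?J {#a,b#}" unfolding jordan_shape_def by fastforce
  with c nil show ?thesis by simp
qed

theorem lemma3p3:
  fixes l1 l2 m1 m2 n :: nat
  assumes "l1 \<ge> l2" and "l2 \<ge> 1" and "l1 - l2 = 1 \<or> l1 - l2 \<ge> 3" and "n = l1 + l2"
    and "m1 \<ge> m2" and "m2 \<ge> 1" and "m1 + m2 = n"
  shows "(\<exists>B A :: 'a :: {alg_closed_field, field_char_0} mat.
            B \<in> carrier_mat n n \<and> A \<in> carrier_mat n n \<and> B * A = A * B \<and>
            nilpotent_mat B \<and> nilpotent_mat A \<and>
            jordan_shape B {#l1, l2#} \<and> jordan_shape A {#m1, m2#})
         \<longleftrightarrow> (m1, m2) = (l1, l2)"
proof
  assume "\<exists>B A :: 'a mat.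
            B \<in> carrier_mat n n \<and> A \<in> carrier_mat n n \<and> B * A = A * B \<and>
            nilpotent_mat B \<and> nilpotent_mat A \<and>
            jordan_shape B {#l1, l2#} \<and> jordan_shape A {#m1, m2#}"
  then obtain B A :: "'a mat" where B: "B \<in> carrier_mat n n" and A: "A \<in> carrier_mat n n"
    and BA: "B * A = A * B" and nB: "nilpotent_mat B" and nA: "nilpotent_mat A"
    and sB: "jordan_shape B {#l1, l2#}" and sA: "jordan_shape A {#m1, m2#}" by blast
  show "(m1, m2) = (l1, l2)"
  proof (cases "l1 - l2 \<ge> 3")
    case True
    have "m1 = l1" by (rule key_dir[OF B A BA nB nA sB sA]) (use True assms in auto)
    then show ?thesis using assms by simp
  next
    case False
    hence d1: "l1 = l2 + 1" using assms by auto
    show ?thesis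
    proof (cases "m1 \<ge> m2 + 3")
      case True
      have "l1 = m1" by (rule key_dir[OF A B BA[symmetric] nA nB sA sB]) (use True assms in auto)
      then show ?thesis using assms by simp
    next
      case False
      hence "m1 = m2 \<or> m1 = m2 + 1 \<or> m1 = m2 + 2" using assms by auto
      then show ?thesis using assms d1 by auto
    qed
  qed
next
  assume "(m1, m2) = (l1, l2)"
  hence e: "m1 = l1" "m2 = l2" by auto
  let ?J = "jordan_matrix [(l1,0::'a),(l2,0)]"
  from jm2_props[of l2 l1] assms have
    "?J \<in> carrier_mat n n \<and> nilpotent_mat ?J \<and> jordan_shape ?J {#l1,l2#}" by simp
  then show "\<exists>B A :: 'a mat.
            B \<in> carrier_mat n n \<and> A \<in> carrier_mat n n \<and> B * A = A * B \<and>
            nilpotent_mat B \<and> nilpotent_mat A \<and>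
            jordan_shape B {#l1, l2#} \<and> jordan_shape A {#m1, m2#}"
    using e by blast
qed

end
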